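(* Let $\mathbf{f}$ be the Fibonacci word. For every index $x\ge0$ of $\mathbf{f}$ and every positive integer $n$, there is a $\lfloor F_n\frac{\sqrt5}{2}\rfloor$-antipower with block length $2F_n$ starting at position $x$ of $\mathbf{f}$.
   Context: The Fibonacci word is $\mathbf{f}=\sigma^{\omega}(0)=0100101001001\cdots$, the fixed point of the morphism $\sigma(0)=01$, $\sigma(1)=0$; it is $0$-indexed. $F_1=F_2=1$, $F_n=F_{n-1}+F_{n-2}$. A $k$-antipower is a word that is the concatenation of $k$ pairwise distinct words (blocks) of equal length; that common length is the block length. *)

theory Defs
  imports Complex_Main "HOL-Number_Theory.Fib"
begin

fun fmorph :: "nat \<Rightarrow> nat list" where
  "fmorph a = (if a = 0 then [0, 1] else [0])"

definition fsigma :: "nat list \<Rightarrow> nat list" where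
  "fsigma w = concat (map fmorph w)"

text \<open>The infinite Fibonacci word (0-indexed): the fixed point of sigma starting with 0.
  The prefix (fsigma ^^ (i+1)) [0] has length at least i+1 (it is F_(i+3)), and
  each such prefix is a prefix of the next one, so this picks letter i of the limit.\<close>
definition fibword :: "nat \<Rightarrow> nat" where
  "fibword i = ((fsigma ^^ (Suc i)) [0]) ! i"

definition factor :: "(nat \<Rightarrow> 'a) \<Rightarrow> nat \<Rightarrow> nat \<Rightarrow> 'a list" where
  "factor w x m = map w [x..<x + m]"

definition antipower_at :: "(nat \<Rightarrow> 'a) \<Rightarrow> nat \<Rightarrow> nat \<Rightarrow> nat \<Rightarrow> bool" where
  "antipower_at w x k b \<longleftrightarrow>
     (\<forall>i<k. \<forall>j<k. i \<noteq> j \<longrightarrow> factor w (x + i * b) b \<noteq> factor w (x + j * b) b)"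

end

theory Submission
  imports Defs "HOL-Computational_Algebra.Primes"
begin


definition gph :: real where "gph = (1 + sqrt 5) / 2"
definition gaa :: real where "gaa = (sqrt 5 - 1) / 2"

lemma sqrt5_irr: "sqrt 5 \<notin> \<rat>"
proof
  have p: "prime (5::nat)" by simp
  assume "sqrt 5 \<in> \<rat>"
  hence "sqrt (real 5) \<in> \<rat>" by simp
  then obtain m n :: nat
    where n: "n \<noteq> 0" and sqrt_rat: "\<bar>sqrt (real 5)\<bar> = m / n" and "coprime m n"
    by (rule Rats_abs_nat_div_natE)
  have eq: "m\<^sup>2 = 5 * n\<^sup>2"
  proof -
    from n and sqrt_rat have "m = \<bar>sqrt (real 5)\<bar> * n" by simp
    then have "real (m\<^sup>2) = (sqrt 5)\<^sup>2 * real (n\<^sup>2)" by (simp add: power_mult_distrib)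
    also have "(sqrt 5)\<^sup>2 = (5::real)" by simp
    finally have "real (m\<^sup>2) = real (5 * n\<^sup>2)" by simp
    thus ?thesis by (simp only: of_nat_eq_iff)
  qed
  have "5 dvd m \<and> 5 dvd n"
  proof
    from eq have "5 dvd m\<^sup>2" by simp
    with p show "5 dvd m" using prime_dvd_power by blast
    then obtain k where "m = 5 * k" ..
    with eq have "n\<^sup>2 = 5 * k\<^sup>2" by (simp add: power2_eq_square)
    then have "5 dvd n\<^sup>2" by simp
    with p show "5 dvd n" using prime_dvd_power by blast
  qed
  then have "5 dvd gcd m n" by simp
  with \<open>coprime m n\<close> show False by simp
qed

lemma gph_irr:
  assumes "m > 0" shows "real m * gph \<noteq> of_int N"
proof
  assume h: "real m * gph = of_int N"
  have "sqrt 5 = (2 * of_int N - real m) / real m"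
    using h assms by (simp add: gph_def field_simps)
  also have "\<dots> \<in> \<rat>" by simp
  finally show False using sqrt5_irr by simp
qed

lemma sqrt5_bounds: "2 < sqrt (5::real)" "sqrt (5::real) < 3"
  by (simp_all add: real_less_rsqrt real_sqrt_less_iff real_less_lsqrt)

lemma gph_facts: "gph * gph = gph + 1" "gaa = gph - 1" "gph * gaa = 1" "gaa * gaa = 1 - gaa"
  "0 < gaa" "gaa < 1" "1 < gph" "gph < 2" "3 < 2 * gph"
  using sqrt5_bounds by (auto simp: gph_def gaa_def field_simps)


definition g :: "nat \<Rightarrow> int" where "g j = \<lfloor>real j * gph\<rfloor>"
definition fw :: "nat \<Rightarrow> nat" where "fw i = (if g (i+2) - g (i+1) = 2 then 0 else 1)"

lemma g_strict: assumes "j > 0" shows "of_int (g j) < real j * gph" "real j * gph < of_int (g j) + 1"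
proof -
  have "of_int (g j) \<le> real j * gph" unfolding g_def by simp
  moreover have "of_int (g j) \<noteq> real j * gph" using gph_irr[OF assms, of "g j"] by simp
  ultimately show "of_int (g j) < real j * gph" by simp
  show "real j * gph < of_int (g j) + 1" unfolding g_def by linarith
qed

lemma g_diff: "g (Suc i) - g i = 1 \<or> g (Suc i) - g i = 2"
proof -
  have e: "real (Suc i) * gph = real i * gph + gph" by (simp add: algebra_simps)
  have "g (Suc i) \<ge> g i + 1" unfolding g_def e using gph_facts(7) by linarith
  moreover have "g (Suc i) \<le> g i + 2" unfolding g_def e using gph_facts(8) by linarith
  ultimately show ?thesis by linarith
qed

lemma g_pos: "j > 0 \<Longrightarrow> g j \<ge> 1"
proof -
  assume "j > 0"
  hence "real j \<ge> 1" by simp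
  hence "real j * gph \<ge> 1 * 1" using gph_facts(7) by (intro mult_mono) auto
  thus "g j \<ge> 1" unfolding g_def by simp
qed

lemma g_0: "g 0 = 0" by (simp add: g_def)
lemma g_1: "g 1 = 1" using gph_facts(7,8) by (simp add: g_def floor_eq_iff)
lemma g_2: "g 2 = 3" using gph_facts(9) gph_facts(8) by (simp add: g_def floor_eq_iff)

lemma g_key:
  fixes L :: nat
  defines "N \<equiv> nat (g (L+1))"
  shows "g N = int N + int L" "g (N+1) = int N + int L + 2"
    "g (L+2) = int N + 2 \<Longrightarrow> g (N+2) = int N + int L + 3"
proof -
  have gN: "g (L+1) = int N" unfolding N_def using g_pos[of "L+1"] by simp
  have s1: "real N < real (L+1) * gph" "real (L+1) * gph < real N + 1"
    using g_strict[of "L+1"] gN by auto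
  have gg: "gph = 1 + gaa" using gph_facts(2) by simp
  have ga: "gph * gaa = 1" "0 < gaa" "gaa < 1" using gph_facts by auto
  have A1: "real N * gaa < real L + 1"
  proof -
    have "real N * gaa < real (L+1) * gph * gaa" using s1(1) ga(2) by (simp add: mult_strict_right_mono)
    also have "\<dots> = real L + 1" using ga(1) by (simp add: mult.assoc)
    finally show ?thesis .
  qed
  have A2: "real L + 1 - gaa < real N * gaa"
  proof -
    have "real (L+1) * gph * gaa < (real N + 1) * gaa"
      using s1(2) ga(2) by (simp add: mult_strict_right_mono)
    hence "real (L+1) * gph * gaa - gaa < real N * gaa" by (simp add: algebra_simps)
    moreover have "real (L+1) * gph * gaa = real L + 1" using ga(1) by (simp add: mult.assoc)
    ultimately show ?thesis by simp
  qed
  have eN: "\<And>c. real (N + c) * gph = real (N + c) + real (N+c) * gaa" unfolding gg by (simp add: algebra_simps)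
  show "g N = int N + int L"
  proof -
    have "\<lfloor>real N * gaa\<rfloor> = int L" using A1 A2 ga by (simp add: floor_eq_iff)
    hence "\<lfloor>real N + real N * gaa\<rfloor> = int N + int L"
      by (metis floor_add_int of_int_of_nat_eq add.commute)
    thus ?thesis unfolding g_def using eN[of 0] by simp
  qed
  show "g (N+1) = int N + int L + 2"
  proof -
    have "\<lfloor>real (N+1) * gaa\<rfloor> = int L + 1" using A1 A2 ga by (simp add: floor_eq_iff algebra_simps)
    hence "\<lfloor>real (N+1) + real (N+1) * gaa\<rfloor> = int (N+1) + int L + 1"
      by (metis floor_add_int of_int_of_nat_eq add.commute add.assoc)
    thus ?thesis unfolding g_def using eN[of 1] by simp
  qed
  assume h: "g (L+2) = int N + 2"
  have "real (N+2) < real (L+2) * gph" using g_strict[of "L+2"] h by simp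
  hence "real (N+2) * gaa < real (L+2) * gph * gaa" using ga(2) by (simp add: mult_strict_right_mono)
  also have "\<dots> = real L + 2" using ga(1) by (simp add: mult.assoc)
  finally have B1: "real (N+2) * gaa < real L + 2" .
  have "\<lfloor>real (N+2) * gaa\<rfloor> = int L + 1" using B1 A1 A2 ga by (simp add: floor_eq_iff algebra_simps)
  hence "\<lfloor>real (N+2) + real (N+2) * gaa\<rfloor> = int (N+2) + int L + 1"
    by (metis floor_add_int of_int_of_nat_eq add.commute add.assoc)
  thus "g (N+2) = int N + int L + 3" unfolding g_def using eN[of 2] by simp
qed


lemma fsigma_append: "fsigma (xs @ ys) = fsigma xs @ fsigma ys"
  by (simp add: fsigma_def)

lemma fw_0: "fw 0 = 0" using g_1 g_2 by (simp add: fw_def numeral_2_eq_2)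

lemma fw_cases: "fw i = 0 \<longleftrightarrow> g (i+2) = g (i+1) + 2" "fw i = 1 \<longleftrightarrow> g (i+2) = g (i+1) + 1"
  using g_diff[of "i+1"] by (auto simp: fw_def)

lemma sig_map: "fsigma (map fw [0..<L]) = map fw [0..<nat (g (L+1)) - 1]"
proof (induction L)
  case 0
  then show ?case using g_1 by (simp add: fsigma_def)
next
  case (Suc L)
  define N where "N = nat (g (L+1))"
  have N1: "N \<ge> 1" using g_pos[of "L+1"] unfolding N_def by simp
  have gN: "g (L+1) = int N" unfolding N_def using g_pos[of "L+1"] by simp
  have k1: "g N = int N + int L" "g (N+1) = int N + int L + 2"
    using g_key[of L] unfolding N_def by auto
  have fwN1: "fw (N-1) = 0" using k1 N1 by (simp add: fw_def)
  have IH: "fsigma (map fw [0..<Suc L]) = map fw [0..<N-1] @ fmorph (fw L)"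
    using Suc.IH by (simp add: fsigma_append N_def) (simp add: fsigma_def)
  show ?case
  proof (cases "fw L = 0")
    case True
    hence g2: "g (L+2) = int N + 2" using fw_cases(1)[of L] gN by simp
    hence "g (N+2) = int N + int L + 3" using g_key(3)[of L] unfolding N_def by simp
    hence fwN: "fw N = 1" using k1 by (simp add: fw_def)
    have "fsigma (map fw [0..<Suc L]) = map fw [0..<N-1] @ [0,1]" using IH True by simp
    also have "\<dots> = map fw [0..<Suc N]"
      using fwN fwN1 N1 by (cases N) auto
    also have "Suc N = nat (g (Suc L + 1)) - 1" using g2 by simp
    finally show ?thesis .
  next
    case False
    hence "fw L = 1" by (simp add: fw_def split: if_splits)
    hence g2: "g (L+2) = int N + 1" using fw_cases(2)[of L] gN by simp
    have "fsigma (map fw [0..<Suc L]) = map fw [0..<N-1] @ [0]" using IH \<open>fw L = 1\<close> by simp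
    also have "\<dots> = map fw [0..<N]"
      using fwN1 N1 by (cases N) auto
    also have "N = nat (g (Suc L + 1)) - 1" using g2 by simp
    finally show ?thesis .
  qed
qed

fun lenf :: "nat \<Rightarrow> nat" where
  "lenf 0 = 1" | "lenf (Suc k) = nat (g (lenf k + 1)) - 1"

lemma pow_map: "(fsigma ^^ k) [0] = map fw [0..<lenf k]"
  by (induction k) (simp_all add: fw_0 sig_map)

lemma lenf_ge: "lenf k \<ge> k + 1"
proof (induction k)
  case 0 then show ?case by simp
next
  case (Suc k)
  define L where "L = lenf k"
  have L1: "L \<ge> 1" using Suc unfolding L_def by simp
  have "real (L+1) * gph = real (L+1) + real (L+1) * (gph - 1)" by (simp add: algebra_simps)
  moreover have "real (L+1) * (gph - 1) \<ge> 2 * (gph - 1)"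
    using L1 gph_facts(7) by (intro mult_right_mono) auto
  moreover have "2 * (gph - 1) \<ge> 1" using gph_facts(9) by simp
  ultimately have "real (L+1) * gph \<ge> real L + 2" by simp
  hence "g (L+1) \<ge> int L + 2" unfolding g_def by (simp add: le_floor_iff)
  hence "nat (g (L+1)) - 1 \<ge> L + 1" by simp
  thus ?case using Suc unfolding L_def by simp
qed

lemma fibword_fw: "fibword i = fw i"
proof -
  have "i < lenf (Suc i)" using lenf_ge[of "Suc i"] by simp
  thus ?thesis unfolding fibword_def pow_map by simp
qed


lemma fw_eq_g: "fw a = fw b \<Longrightarrow> g (a+2) - g (a+1) = g (b+2) - g (b+1)"
  using g_diff[of "a+1"] g_diff[of "b+1"] by (auto simp: fw_def split: if_splits)

lemma factor_eq_g:
  assumes "factor fibword x m = factor fibword y m" "j \<le> m"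
  shows "g (x+1+j) - g (x+1) = g (y+1+j) - g (y+1)"
  using assms(2)
proof (induction j)
  case 0 then show ?case by simp
next
  case (Suc j)
  have "fibword (x+j) = fibword (y+j)"
  proof -
    have "factor fibword x m ! j = factor fibword y m ! j" using assms(1) by simp
    thus ?thesis using Suc.prems by (simp add: factor_def)
  qed
  hence "fw (x+j) = fw (y+j)" by (simp add: fibword_fw)
  hence "g (x+j+2) - g (x+j+1) = g (y+j+2) - g (y+j+1)" by (rule fw_eq_g)
  moreover have "g (x+1+j) - g (x+1) = g (y+1+j) - g (y+1)" using Suc by simp
  ultimately show ?case by (simp add: algebra_simps)
qed

lemma int_ivt_aux: fixes P :: "int \<Rightarrow> bool" shows "P a \<Longrightarrow> \<not> P (a + int d) \<Longrightarrow> \<exists>r. P r \<and> \<not> P (r+1)"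
proof (induction d arbitrary: a)
  case 0 then show ?case by simp
next
  case (Suc d)
  show ?case
  proof (cases "P (a+1)")
    case True
    have "\<not> P (a + 1 + int d)" using Suc.prems(2) by (simp add: algebra_simps)
    then show ?thesis using Suc.IH[OF True] by blast
  next
    case False then show ?thesis using Suc.prems(1) by blast
  qed
qed

lemma int_ivt: fixes P :: "int \<Rightarrow> bool" shows "P a \<Longrightarrow> \<not> P b \<Longrightarrow> a \<le> b \<Longrightarrow> \<exists>r. P r \<and> \<not> P (r+1)"
  using int_ivt_aux[of P a "nat (b - a)"] by simp

lemma lattice:
  fixes p q :: int and u v L c :: real
  assumes "0 < p" "p \<le> q" "q < 2*p" "u > 0" "v > 0" "L > u+v"
  shows "\<exists>s r. 0 \<le> s*p + r*q \<and> s*p + r*q \<le> 2*p \<and> c < -s*u + r*v \<and> -s*u + r*v < c + L"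
proof -
  define V where "V r = real_of_int (r*q div p) * u + real_of_int r * v" for r
  have adm: "0 \<le> (-(r*q div p))*p + r*q \<and> (-(r*q div p))*p + r*q \<le> 2*p"
            "0 \<le> (-(r*q div p) + 1)*p + r*q \<and> (-(r*q div p)+1)*p + r*q \<le> 2*p" for r
  proof -
    define M where "M = r*q div p"
    define R where "R = r*q mod p"
    have e: "r*q = M*p + R" unfolding M_def R_def by simp
    have "0 \<le> R" "R < p" using assms(1) unfolding R_def by auto
    thus "0 \<le> (-(r*q div p))*p + r*q \<and> (-(r*q div p))*p + r*q \<le> 2*p"
      "0 \<le> (-(r*q div p) + 1)*p + r*q \<and> (-(r*q div p)+1)*p + r*q \<le> 2*p"
      unfolding M_def[symmetric] e by (simp_all add: algebra_simps)
  qed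
  have Vval: "-real_of_int (-(r*q div p)) * u + real_of_int r * v = V r"
             "-real_of_int (-(r*q div p) + 1) * u + real_of_int r * v = V r - u" for r
    by (simp_all add: V_def algebra_simps)
  have step: "(r+1)*q div p - r*q div p \<in> {1,2}" for r
  proof -
    define M where "M = r*q div p"
    define R where "R = r*q mod p"
    define D where "D = (r+1)*q div p"
    define E where "E = (r+1)*q mod p"
    have e: "r*q = M*p + R" unfolding M_def R_def by simp
    have e2: "(r+1)*q = D*p + E" unfolding D_def E_def by simp
    have R: "0 \<le> R" "R < p" using assms(1) unfolding R_def by auto
    have E: "0 \<le> E" "E < p" using assms(1) unfolding E_def by auto
    have e3: "(r+1)*q = r*q + q" by (simp add: algebra_simps)
    have "M*p < (D+1)*p" using e e2 e3 R E assms(2) by (simp add: algebra_simps)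
    hence d1': "M < D+1" using assms(1) by (simp add: mult_less_cancel_right)
    have "D*p < (M+3)*p" using e e2 e3 R E assms(3) by (simp add: algebra_simps)
    hence d2': "D < M+3" using assms(1) by (simp add: mult_less_cancel_right)
    have "M \<noteq> D" proof
      assume "M = D" thus False using e e2 e3 R E assms(1,2) by (simp add: algebra_simps)
    qed
    hence d1: "(r+1)*q div p \<ge> r*q div p + 1" and d2: "(r+1)*q div p \<le> r*q div p + 2"
      using d1' d2' unfolding M_def D_def by auto
    show ?thesis using d1 d2 by auto
  qed
  have gapV: "V (r+1) - u \<le> V r + u + v" "V r < V (r+1)" for r
  proof -
    define dd where "dd = (r+1)*q div p - r*q div p"
    have "V (r+1) - V r = real_of_int dd * u + v"
      unfolding dd_def by (simp add: V_def algebra_simps)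
    moreover have "dd = 1 \<or> dd = 2" using step[of r] unfolding dd_def by auto
    ultimately show "V (r+1) - u \<le> V r + u + v" "V r < V (r+1)" using assms(4,5) by auto
  qed
  have hi: "V r \<ge> real_of_int r * v" if "r \<ge> 0" for r
  proof -
    have "r*q div p \<ge> 0" using that assms(1,2) by (simp add: pos_imp_zdiv_nonneg_iff)
    thus ?thesis using assms(4) by (simp add: V_def)
  qed
  have lo: "V r \<le> real_of_int r * v" if "r \<le> 0" for r
  proof -
    have "r*q \<le> 0" using that assms(1,2) by (simp add: mult_nonpos_nonneg)
    hence "r*q div p \<le> 0" using assms(1) by (simp add: div_nonpos_pos_le0)
    thus ?thesis using assms(4) by (simp add: V_def mult_nonpos_nonneg)
  qed
  obtain r1 :: int where r1: "r1 \<ge> 0" "real_of_int r1 * v > c"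
  proof -
    obtain nn :: nat where "c / v < real nn" using reals_Archimedean2 by blast
    hence "real nn * v > c" using assms(5) by (simp add: field_simps)
    thus ?thesis using that[of "int nn"] by simp
  qed
  obtain r0 :: int where r0: "r0 \<le> 0" "real_of_int r0 * v \<le> c"
  proof -
    obtain nn :: nat where "- c / v < real nn" using reals_Archimedean2 by blast
    hence "- real nn * v < c" using assms(5) by (simp add: field_simps)
    thus ?thesis using that[of "- int nn"] by simp
  qed
  have "\<exists>r. V r \<le> c \<and> \<not> V (r+1) \<le> c"
  proof (rule int_ivt[of _ r0 r1])
    show "V r0 \<le> c" using lo[OF r0(1)] r0(2) by linarith
    show "\<not> V r1 \<le> c" using hi[OF r1(1)] r1(2) by linarith
    show "r0 \<le> r1" using r0 r1 by simp
  qed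
  then obtain r where r: "V r \<le> c" "c < V (r+1)" by auto
  show ?thesis
  proof (cases "V (r+1) - u > c")
    case True
    have "c < V (r+1) - u \<and> V (r+1) - u < c + L" using True gapV[of r] r assms(6) by linarith
    then show ?thesis using adm(2)[of "r+1"] Vval(2)[of "r+1"]
      apply (rule_tac exI[of _ "-((r+1)*q div p) + 1"])
      apply (rule_tac exI[of _ "r+1"]) by simp
  next
    case False
    have "c < V (r+1) \<and> V (r+1) < c + L" using False r assms(4,5,6) by linarith
    then show ?thesis using adm(1)[of "r+1"] Vval(1)[of "r+1"]
      apply (rule_tac exI[of _ "-((r+1)*q div p)"])
      apply (rule_tac exI[of _ "r+1"]) by simp
  qed
qed


lemma fib_delta: "real (fib n) * gph - real (fib (Suc n)) = - ((- gaa) ^ n)"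
proof (induction n rule: fib.induct)
  case 1 then show ?case by simp
next
  case 2 then show ?case using gph_facts(2) by simp
next
  case (3 n)
  have sq: "(- gaa) ^ 2 = 1 + (- gaa)" using gph_facts(4) by (simp add: power2_eq_square)
  have "(- gaa) ^ Suc (Suc n) = (- gaa) ^ n * (-gaa)^2" by (simp add: power2_eq_square algebra_simps)
  also have "\<dots> = (- gaa) ^ n + (- gaa) ^ Suc n" unfolding sq by (simp add: algebra_simps)
  finally have e: "(- gaa) ^ Suc (Suc n) = (- gaa) ^ n + (- gaa) ^ Suc n" .
  show ?case using 3 e by (simp add: algebra_simps)
qed

lemma fib_sqrt5: "real (fib n) * sqrt 5 = gph ^ n - (- gaa) ^ n"
proof -
  have "(1 - sqrt 5) / 2 = - gaa" by (simp add: gaa_def field_simps)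
  thus ?thesis using fib_closed_form[of n] unfolding gph_def by simp
qed

lemma fib_n3: assumes "n \<ge> 3" shows "fib n \<le> fib (Suc n)" "fib (Suc n) < 2 * fib n" "fib n > 0"
proof -
  define m where "m = n - 3"
  have m: "n = Suc (Suc (Suc m))" using assms unfolding m_def by arith
  have "fib (Suc m) > 0" by (simp add: fib_neq_0_nat)
  hence "fib (Suc (Suc m)) < fib (Suc (Suc (Suc m)))" by simp
  thus "fib n \<le> fib (Suc n)" "fib (Suc n) < 2 * fib n" "fib n > 0" unfolding m by simp_all
qed

lemma dense:
  assumes "n \<ge> 3" "L > gaa ^ n + gaa ^ Suc n"
  shows "\<exists>j \<le> 2 * fib n. \<exists>K::int. c < real j * gph - K \<and> real j * gph - K < c + L"
proof -
  define p where "p = int (fib n)"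
  define q where "q = int (fib (Suc n))"
  have pq: "0 < p" "p \<le> q" "q < 2*p" using fib_n3[OF assms(1)] unfolding p_def q_def by auto
  have uv: "gaa ^ n > 0" "gaa ^ Suc n > 0" using gph_facts(5) by auto
  have val: "real_of_int (s*p + r*q) * gph - of_int (s * int (fib (Suc n)) + r * int (fib (Suc (Suc n))))
     = (-1)^n * (- s * gaa ^ n + r * gaa ^ Suc n)" for s r
  proof -
    have "real_of_int (s*p + r*q) * gph - of_int (s * int (fib (Suc n)) + r * int (fib (Suc (Suc n))))
      = of_int s * (real (fib n) * gph - real (fib (Suc n))) + of_int r * (real (fib (Suc n)) * gph - real (fib (Suc (Suc n))))"
      unfolding p_def q_def by (simp add: algebra_simps)
    also have "\<dots> = of_int s * (- ((- gaa) ^ n)) + of_int r * (- ((- gaa) ^ Suc n))"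
      using fib_delta[of n] fib_delta[of "Suc n"] by simp
    also have "\<dots> = (-1)^n * (- s * gaa ^ n + r * gaa ^ Suc n)"
      by (simp add: power_minus[of gaa] algebra_simps)
    finally show ?thesis by simp
  qed
  have main: "\<exists>s r. 0 \<le> s*p + r*q \<and> s*p + r*q \<le> 2*p \<and> c < (-1)^n * (- s * gaa ^ n + r * gaa ^ Suc n)
      \<and> (-1)^n * (- s * gaa ^ n + r * gaa ^ Suc n) < c + L"
  proof (cases "even n")
    case True
    then show ?thesis using lattice[OF pq uv assms(2), of c] by simp
  next
    case False
    obtain s r where "0 \<le> s*p + r*q \<and> s*p + r*q \<le> 2*p \<and> -c-L < (- s * gaa ^ n + r * gaa ^ Suc n)
      \<and> (- s * gaa ^ n + r * gaa ^ Suc n) < -c - L + L"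
      using lattice[OF pq uv assms(2), of "-c-L"] by auto
    moreover have "(-1::real)^n = -1" using False by simp
    ultimately show ?thesis
      apply (rule_tac exI[of _ s])
      apply (rule_tac exI[of _ r]) by auto
  qed
  then obtain s r where sr: "0 \<le> s*p + r*q" "s*p + r*q \<le> 2*p" "c < (-1)^n * (- s * gaa ^ n + r * gaa ^ Suc n)"
      "(-1)^n * (- s * gaa ^ n + r * gaa ^ Suc n) < c + L" by blast
  define j where "j = nat (s*p + r*q)"
  have rj: "real j = real_of_int (s*p + r*q)" unfolding j_def using sr(1) by simp
  have "j \<le> 2 * fib n" unfolding j_def using sr(2) p_def by simp
  thus ?thesis using sr(3,4) val[of s r] unfolding rj[symmetric]
    by (intro exI[of _ j] conjI exI[of _ "s * int (fib (Suc n)) + r * int (fib (Suc (Suc n)))"]) auto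
qed

lemma sep:
  fixes A t L :: real
  assumes D: "\<And>c. \<exists>j \<le> m. \<exists>K::int. c < real j * gph - K \<and> real j * gph - K < c + L"
    and t: "0 < t" "t < 1" "L \<le> t" "L \<le> 1 - t"
  shows "\<exists>j \<le> m. \<lfloor>A + real j * gph\<rfloor> - \<lfloor>A\<rfloor> \<noteq> \<lfloor>A + t + real j * gph\<rfloor> - \<lfloor>A + t\<rfloor>"
proof (cases "\<lfloor>A + t\<rfloor> = \<lfloor>A\<rfloor>")
  case True
  obtain j K where jK: "j \<le> m" "-A-t < real j * gph - of_int K" "real j * gph - of_int K < -A-t + L"
    using D[of "-A-t"] by auto
  have "\<lfloor>A + real j * gph\<rfloor> < K" using jK(3) t(3) by linarith
  moreover have "of_int K \<le> A + t + real j * gph" using jK(2) by linarith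
  hence "K \<le> \<lfloor>A + t + real j * gph\<rfloor>" by (simp add: le_floor_iff)
  ultimately show ?thesis using True jK(1) by (intro exI[of _ j]) auto
next
  case False
  have F: "\<lfloor>A + t\<rfloor> = \<lfloor>A\<rfloor> + 1" using False t(1,2) by linarith
  obtain j K where jK: "j \<le> m" "-A < real j * gph - of_int K" "real j * gph - of_int K < -A + L"
    using D[of "-A"] by auto
  have "of_int K \<le> A + real j * gph" using jK(2) by linarith
  hence "K \<le> \<lfloor>A + real j * gph\<rfloor>" by (simp add: le_floor_iff)
  moreover have "\<lfloor>A + t + real j * gph\<rfloor> \<le> K" using jK(3) t(4) by linarith
  ultimately show ?thesis using F jK(1) by (intro exI[of _ j]) auto
qed


lemma pair_sep:
  fixes x n i i' :: nat
  assumes n3: "n \<ge> 3" and ii: "i < i'" and ik: "i' < nat \<lfloor>real (fib n) * sqrt 5 / 2\<rfloor>"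
  shows "factor fibword (x + i * (2 * fib n)) (2 * fib n) \<noteq> factor fibword (x + i' * (2 * fib n)) (2 * fib n)"
proof
  define b where "b = 2 * fib n"
  define k where "k = nat \<lfloor>real (fib n) * sqrt 5 / 2\<rfloor>"
  define D where "D = i' - i"
  define y where "y = gaa ^ n"
  assume eq: "factor fibword (x + i * (2 * fib n)) (2 * fib n) = factor fibword (x + i' * (2 * fib n)) (2 * fib n)"
  have geq: "g (x + i*b + 1 + j) - g (x + i*b + 1) = g (x + i'*b + 1 + j) - g (x + i'*b + 1)" if "j \<le> b" for j
    using factor_eq_g[OF eq] that unfolding b_def by simp
  define A where "A = real (x + i*b + 1) * gph"
  define t where "t = - 2 * real D * (- gaa) ^ n"
  define C where "C = 2 * int D * int (fib (Suc n))"
  have D1: "D \<ge> 1" "i' = i + D" using ii unfolding D_def by auto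
  have Yv: "real (x + i'*b + 1 + j) * gph = A + t + real j * gph + of_int C" for j
  proof -
    have "real (x + i'*b + 1 + j) * gph = A + real j * gph + 2 * real D * (real (fib n) * gph)"
      unfolding A_def b_def D1(2) by (simp add: algebra_simps)
    also have "real (fib n) * gph = real (fib (Suc n)) - (- gaa) ^ n" using fib_delta[of n] by simp
    finally show ?thesis unfolding t_def C_def by (simp add: algebra_simps)
  qed
  have gY: "g (x + i'*b + 1 + j) = \<lfloor>A + t + real j * gph\<rfloor> + C" for j
    unfolding g_def Yv by (metis floor_add_int)
  have gY0: "g (x + i'*b + 1) = \<lfloor>A + t\<rfloor> + C"
    using gY[of 0] by simp
  have gX: "g (x + i*b + 1 + j) = \<lfloor>A + real j * gph\<rfloor>" for j
    unfolding g_def A_def by (simp add: algebra_simps)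
  have gX0: "g (x + i*b + 1) = \<lfloor>A\<rfloor>" unfolding g_def A_def by simp
  have key: "\<lfloor>A + real j * gph\<rfloor> - \<lfloor>A\<rfloor> = \<lfloor>A + t + real j * gph\<rfloor> - \<lfloor>A + t\<rfloor>" if "j \<le> b" for j
    using geq[OF that] gX[of j] gX0 gY[of j] gY0 by simp
  define T where "T = 2 * real D * y"
  have y: "0 < y" "y \<le> gaa ^ 3" "gaa ^ 3 < 1 - gaa" "gph ^ n * y = 1"
  proof -
    show "0 < y" unfolding y_def using gph_facts(5) by simp
    show "y \<le> gaa ^ 3" unfolding y_def using gph_facts(5,6) n3 by (simp add: power_decreasing)
    have "gaa ^ 3 = gaa * (gaa * gaa)" by (simp add: power3_eq_cube)
    also have "\<dots> < gaa * gaa" using gph_facts(5,6) by simp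
    also have "\<dots> = 1 - gaa" using gph_facts(4) .
    finally show "gaa ^ 3 < 1 - gaa" .
    show "gph ^ n * y = 1" unfolding y_def by (simp add: power_mult_distrib[symmetric] gph_facts(3))
  qed
  have tT: "t = T \<or> t = - T"
    unfolding t_def T_def y_def by (cases "even n") (simp_all add: power_minus[of gaa])
  have Ty: "gaa ^ Suc n = y * gaa" unfolding y_def by simp
  have T1: "T > y + y * gaa"
  proof -
    have "T \<ge> 2 * y" unfolding T_def using D1(1) y(1) by simp
    moreover have "y * gaa < y" using y(1) gph_facts(6) by simp
    ultimately show ?thesis by linarith
  qed
  have kb: "real k \<le> real (fib n) * sqrt 5 / 2"
  proof -
    have z: "0 \<le> \<lfloor>real (fib n) * sqrt 5 / 2\<rfloor>" by simp
    have "real k = of_int \<lfloor>real (fib n) * sqrt 5 / 2\<rfloor>" unfolding k_def using z by simp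
    also have "\<dots> \<le> real (fib n) * sqrt 5 / 2" by (rule of_int_floor_le)
    finally show ?thesis .
  qed
  have Dk: "real D + 1 \<le> real k" using ii ik unfolding D_def k_def by simp
  have "2 * real D \<le> gph ^ n - (- gaa) ^ n - 2" using kb Dk fib_sqrt5[of n] by simp
  hence "T \<le> (gph ^ n - (- gaa) ^ n - 2) * y" unfolding T_def using y(1) by (simp add: mult_right_mono)
  also have "\<dots> = 1 - (- gaa) ^ n * y - 2 * y" using y(4) by (simp add: algebra_simps)
  finally have T2a: "T \<le> 1 - (- gaa) ^ n * y - 2 * y" .
  have "- ((- gaa) ^ n * y) \<le> y * y"
    unfolding y_def using gph_facts(5) by (cases "even n") (simp_all add: power_minus[of gaa])
  hence T2: "T \<le> 1 + y * y - 2 * y" using T2a by linarith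
  have "y * y \<le> y * gaa ^ 3" using y(1,2) by simp
  also have "\<dots> < y * (1 - gaa)" using y(1,3) by simp
  finally have T3: "1 - T > y + y * gaa" using T2 by (simp add: algebra_simps)
  define L where "L = min T (1 - T)"
  have Lg: "L > gaa ^ n + gaa ^ Suc n" unfolding L_def Ty y_def[symmetric] using T1 T3 by simp
  have Dn: "\<And>c. \<exists>j \<le> b. \<exists>K::int. c < real j * gph - K \<and> real j * gph - K < c + L"
    using dense[OF n3 Lg] unfolding b_def by blast
  have yg: "0 < y * gaa" using y(1) gph_facts(5) by simp
  have Tb: "0 < T" "T < 1" "L \<le> T" "L \<le> 1 - T" using T1 T3 y(1) yg unfolding L_def
    by auto
  from tT show False
  proof
    assume "t = T"
    then obtain j where "j \<le> b" "\<lfloor>A + real j * gph\<rfloor> - \<lfloor>A\<rfloor> \<noteq> \<lfloor>A + t + real j * gph\<rfloor> - \<lfloor>A + t\<rfloor>"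
      using sep[OF Dn Tb, of A] by auto
    thus False using key by blast
  next
    assume "t = - T"
    then obtain j where "j \<le> b" "\<lfloor>(A + t) + real j * gph\<rfloor> - \<lfloor>A + t\<rfloor> \<noteq> \<lfloor>(A + t) + T + real j * gph\<rfloor> - \<lfloor>(A + t) + T\<rfloor>"
      using sep[OF Dn Tb, of "A + t"] by auto
    thus False using key \<open>t = - T\<close> by auto
  qed
qed

theorem proposition17:
  fixes x n :: nat
  assumes "n \<ge> 1"
  shows "antipower_at fibword x (nat \<lfloor>real (fib n) * sqrt 5 / 2\<rfloor>) (2 * fib n)"
proof (cases "n \<ge> 3")
  case True
  show ?thesis unfolding antipower_at_def
  proof (intro allI impI)
    fix i j assume h: "i < nat \<lfloor>real (fib n) * sqrt 5 / 2\<rfloor>" "j < nat \<lfloor>real (fib n) * sqrt 5 / 2\<rfloor>" "i \<noteq> j"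
    show "factor fibword (x + i * (2 * fib n)) (2 * fib n) \<noteq> factor fibword (x + j * (2 * fib n)) (2 * fib n)"
    proof (cases "i < j")
      case True then show ?thesis using pair_sep[OF \<open>n \<ge> 3\<close> True h(2)] by simp
    next
      case False
      hence "j < i" using h(3) by simp
      then show ?thesis using pair_sep[OF \<open>n \<ge> 3\<close> \<open>j < i\<close> h(1)] by metis
    qed
  qed
next
  case False
  hence "n = 1 \<or> n = 2" using assms by auto
  hence f1: "fib n = 1" by auto
  have "\<lfloor>sqrt 5 / 2 :: real\<rfloor> \<le> 1" using sqrt5_bounds(2) by (simp add: floor_le_iff)
  hence "nat \<lfloor>sqrt 5 / 2 :: real\<rfloor> \<le> 1" by linarith
  hence k1: "nat \<lfloor>real (fib n) * sqrt 5 / 2\<rfloor> \<le> 1" using f1 by (simp del: One_nat_def)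
  show ?thesis unfolding antipower_at_def using k1 by auto
qed

end
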